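(* Let $\Omega=\mathbb{C}[x_1,\dots,x_n]\otimes\wedge\mathbb{C}^n$ be the algebra of polynomial differential forms and let $\mathcal{I}_n$ be its ideal generated by $p_1,\dots,p_n,dp_1,\dots,dp_n$, where $p_j=\sum_ix_i^j$ and $d$ is the exterior derivative. Let $1\le r\le n$ and let $h_r(x_r,\dots,x_n)$ be the complete homogeneous symmetric polynomial of degree $r$ in the variables $x_r,\dots,x_n$. Then for $i=r,\dots,n$, \[ \frac{\partial h_r(x_r,\dots,x_n)}{\partial x_i}\,dx_r\wedge\cdots\wedge dx_n\in\mathcal{I}_n. \] *)

theory Defs
  imports "HOL-Analysis.Analysis"
begin

type_synonym pfun = "(nat \<Rightarrow> complex) \<Rightarrow> complex"
  \<comment> \<open>polynomial (functions) in variables x_1, ..., x_n; a point is x :: nat => complex\<close>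

inductive_set polyfun :: "nat \<Rightarrow> pfun set" for n :: nat where
  pconst: "(\<lambda>x. c) \<in> polyfun n"
| pvar: "1 \<le> i \<Longrightarrow> i \<le> n \<Longrightarrow> (\<lambda>x. x i) \<in> polyfun n"
| padd: "f \<in> polyfun n \<Longrightarrow> g \<in> polyfun n \<Longrightarrow> (\<lambda>x. f x + g x) \<in> polyfun n"
| pmult: "f \<in> polyfun n \<Longrightarrow> g \<in> polyfun n \<Longrightarrow> (\<lambda>x. f x * g x) \<in> polyfun n"

definition partial :: "nat \<Rightarrow> pfun \<Rightarrow> pfun" where
  "partial i f = (\<lambda>x. deriv (\<lambda>t. f (x(i := t))) (x i))"

text \<open>Differential forms: a form assigns to each index set S (standing for the basis
  element dx_S = dx_{s_1} \<and> ... \<and> dx_{s_k}, s_1 < ... < s_k) its coefficient.\<close>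
type_synonym form = "nat set \<Rightarrow> pfun"

definition Omega :: "nat \<Rightarrow> form set" where
  "Omega n = {w. (\<forall>S. w S \<in> polyfun n) \<and> (\<forall>S. \<not> S \<subseteq> {1..n} \<longrightarrow> w S = (\<lambda>x. 0))}"

definition wsign :: "nat set \<Rightarrow> nat set \<Rightarrow> complex" where
  "wsign S T = (-1) ^ card {(s, t). s \<in> S \<and> t \<in> T \<and> t < s}"

definition wedge :: "form \<Rightarrow> form \<Rightarrow> form" where
  "wedge w v = (\<lambda>U x. if finite U then
      (\<Sum>S\<in>Pow U. wsign S (U - S) * w S x * v (U - S) x) else 0)"

definition zero_form :: form where
  "zero_form = (\<lambda>U x. 0)"

definition add_form :: "form \<Rightarrow> form \<Rightarrow> form" where
  "add_form w v = (\<lambda>U x. w U x + v U x)"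

definition fun_form :: "pfun \<Rightarrow> form" where
  "fun_form f = (\<lambda>U. if U = {} then f else (\<lambda>x. 0))"

text \<open>Exterior derivative of a 0-form in n variables: df = sum_i (df/dx_i) dx_i.\<close>
definition dform :: "nat \<Rightarrow> pfun \<Rightarrow> form" where
  "dform n f = (\<lambda>U. if \<exists>i\<in>{1..n}. U = {i} then partial (THE i. U = {i}) f else (\<lambda>x. 0))"

definition power_sum :: "nat \<Rightarrow> nat \<Rightarrow> pfun" where
  "power_sum n j = (\<lambda>x. \<Sum>i=1..n. x i ^ j)"

inductive_set ideal_I :: "nat \<Rightarrow> form set" for n :: nat where
  gen_p: "1 \<le> j \<Longrightarrow> j \<le> n \<Longrightarrow> fun_form (power_sum n j) \<in> ideal_I n"
| gen_dp: "1 \<le> j \<Longrightarrow> j \<le> n \<Longrightarrow> dform n (power_sum n j) \<in> ideal_I n"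
| zero: "zero_form \<in> ideal_I n"
| add: "a \<in> ideal_I n \<Longrightarrow> b \<in> ideal_I n \<Longrightarrow> add_form a b \<in> ideal_I n"
| lmult: "w \<in> Omega n \<Longrightarrow> a \<in> ideal_I n \<Longrightarrow> wedge w a \<in> ideal_I n"
| rmult: "w \<in> Omega n \<Longrightarrow> a \<in> ideal_I n \<Longrightarrow> wedge a w \<in> ideal_I n"

definition complete_hom :: "nat \<Rightarrow> nat set \<Rightarrow> pfun" where
  "complete_hom k S = (\<lambda>x. \<Sum>\<alpha>\<in>{\<alpha>. (\<forall>i. i \<notin> S \<longrightarrow> \<alpha> i = 0) \<and> sum \<alpha> S = k}.
      \<Prod>i\<in>S. x i ^ \<alpha> i)"

end

theory Submission
  imports Defs
begin

lemma polyfun_diff: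
  assumes "f \<in> polyfun n"
  shows "(\<lambda>t. f (x(i := t))) field_differentiable (at t)"
  using assms
proof (induction f)
  case (pconst c) then show ?case by simp
next
  case (pvar j) then show ?case
    by (cases "j = i") (auto simp: field_differentiable_ident field_differentiable_const)
next
  case (padd f g) then show ?case by (simp add: field_differentiable_add)
next
  case (pmult f g) then show ?case by (simp add: field_differentiable_mult)
qed

lemma partial_const: "partial i (\<lambda>x. c) = (\<lambda>x. 0)"
  by (simp add: partial_def)

lemma partial_add:
  assumes "f \<in> polyfun n" "g \<in> polyfun n"
  shows "partial i (\<lambda>x. f x + g x) = (\<lambda>x. partial i f x + partial i g x)"
  unfolding partial_def
  by (rule ext, rule deriv_add, (rule polyfun_diff[OF assms(1)]), (rule polyfun_diff[OF assms(2)]))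

lemma partial_mult:
  assumes "f \<in> polyfun n" "g \<in> polyfun n"
  shows "partial i (\<lambda>x. f x * g x) = (\<lambda>x. f x * partial i g x + partial i f x * g x)"
  unfolding partial_def
  apply (rule ext)
  apply (subst deriv_mult[OF polyfun_diff[OF assms(1)] polyfun_diff[OF assms(2)]])
  apply simp
  done

lemma partial_var: "partial i (\<lambda>x. x j) = (\<lambda>x. if j = i then 1 else 0)"
  unfolding partial_def by (cases "j = i") auto

lemma partial_indep:
  assumes "\<And>x t. f (x(k := t)) = f x"
  shows "partial k f = (\<lambda>x. 0)"
  unfolding partial_def using assms by simp

lemma polyfun_partial:
  assumes "f \<in> polyfun n"
  shows "partial i f \<in> polyfun n"
  using assms
proof (induction f)
  case (pconst c) then show ?case by (simp add: partial_const polyfun.pconst)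
next
  case (pvar j) then show ?case
    by (cases "j = i") (auto simp: partial_var polyfun.pconst)
next
  case (padd f g) then show ?case by (simp add: partial_add polyfun.padd)
next
  case (pmult f g) then show ?case by (simp add: partial_mult polyfun.padd polyfun.pmult)
qed

lemma wsign_empty_left[simp]: "wsign {} T = 1"
  by (simp add: wsign_def)

lemma wsign_empty_right[simp]: "wsign S {} = 1"
  by (simp add: wsign_def)

lemma wedge_fun_form_left:
  "wedge (fun_form g) w = (\<lambda>U x. if finite U then g x * w U x else 0)"
proof (intro ext)
  fix U x
  show "wedge (fun_form g) w U x = (if finite U then g x * w U x else 0)"
  proof (cases "finite U")
    case True
    have "wedge (fun_form g) w U x = (\<Sum>S\<in>Pow U. if S = {} then g x * w U x else 0)"
      unfolding wedge_def fun_form_def if_P[OF True]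
      by (rule sum.cong) auto
    also have "\<dots> = g x * w U x" using True by (subst sum.delta) auto
    finally show ?thesis using True by simp
  qed (simp add: wedge_def)
qed

lemma wedge_fun_form_right:
  "wedge w (fun_form g) = (\<lambda>U x. if finite U then w U x * g x else 0)"
proof (intro ext)
  fix U x
  show "wedge w (fun_form g) U x = (if finite U then w U x * g x else 0)"
  proof (cases "finite U")
    case True
    have "wedge w (fun_form g) U x = (\<Sum>S\<in>Pow U. if S = U then w U x * g x else 0)"
      unfolding wedge_def fun_form_def if_P[OF True]
      by (rule sum.cong) auto
    also have "\<dots> = w U x * g x" using True by (subst sum.delta) auto
    finally show ?thesis using True by simp
  qed (simp add: wedge_def)
qed

lemma fun_form_Omega: "f \<in> polyfun n \<Longrightarrow> fun_form f \<in> Omega n"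
  unfolding Omega_def fun_form_def by (auto intro: polyfun.pconst)

lemma dform_Omega: "f \<in> polyfun n \<Longrightarrow> dform n f \<in> Omega n"
  unfolding Omega_def dform_def by (auto intro: polyfun.pconst polyfun_partial)

definition PP :: "nat \<Rightarrow> pfun set" where
  "PP n = {f. f \<in> polyfun n \<and> fun_form f \<in> ideal_I n \<and> dform n f \<in> ideal_I n}"

lemma PP_power_sum:
  assumes "1 \<le> j" "j \<le> n"
  shows "power_sum n j \<in> PP n"
proof -
  have "power_sum n j \<in> polyfun n"
  proof -
    have "\<And>A. A \<subseteq> {1..n} \<Longrightarrow> finite A \<Longrightarrow> (\<lambda>x. \<Sum>i\<in>A. x i ^ j) \<in> polyfun n"
    proof -
      fix A :: "nat set" assume a: "A \<subseteq> {1..n}" "finite A"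
      from a(2,1) show "(\<lambda>x. \<Sum>i\<in>A. x i ^ j) \<in> polyfun n"
      proof (induction A rule: finite_induct)
        case empty then show ?case by (simp add: polyfun.pconst)
      next
        case (insert a A)
        have v: "(\<lambda>x. x a) \<in> polyfun n" using insert by (auto intro: polyfun.pvar)
        have "(\<lambda>x. x a ^ k) \<in> polyfun n" for k
        proof (induction k)
          case 0 then show ?case by (simp add: polyfun.pconst)
        next
          case (Suc k) then show ?case using polyfun.pmult[OF v Suc] by simp
        qed
        then show ?case using insert polyfun.padd[of "\<lambda>x. x a ^ j" n "\<lambda>x. \<Sum>i\<in>A. x i ^ j"] by simp
      qed
    qed
    then show ?thesis unfolding power_sum_def by simp
  qed
  then show ?thesis unfolding PP_def using assms by (auto intro: ideal_I.gen_p ideal_I.gen_dp)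
qed

lemma PP_add:
  assumes "f \<in> PP n" "g \<in> PP n"
  shows "(\<lambda>x. f x + g x) \<in> PP n"
proof -
  have pf: "f \<in> polyfun n" "g \<in> polyfun n" using assms by (auto simp: PP_def)
  have "fun_form (\<lambda>x. f x + g x) = add_form (fun_form f) (fun_form g)"
    unfolding fun_form_def add_form_def by auto
  moreover have "dform n (\<lambda>x. f x + g x) = add_form (dform n f) (dform n g)"
    unfolding dform_def add_form_def using partial_add[OF pf] by (auto intro!: ext)
  ultimately show ?thesis using assms pf unfolding PP_def
    by (auto intro: ideal_I.add polyfun.padd)
qed

lemma PP_mult:
  assumes "f \<in> PP n" "g \<in> polyfun n"
  shows "(\<lambda>x. g x * f x) \<in> PP n"
proof -
  have pf: "f \<in> polyfun n" using assms by (auto simp: PP_def)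
  have "fun_form (\<lambda>x. g x * f x) = wedge (fun_form g) (fun_form f)"
    unfolding wedge_fun_form_left unfolding fun_form_def by (auto intro!: ext)
  moreover have "dform n (\<lambda>x. g x * f x) = add_form (wedge (fun_form g) (dform n f)) (wedge (dform n g) (fun_form f))"
    unfolding wedge_fun_form_left wedge_fun_form_right add_form_def dform_def
    using partial_mult[OF assms(2) pf] by (auto intro!: ext)
  moreover have "wedge (fun_form g) (fun_form f) \<in> ideal_I n"
    using assms pf by (auto simp: PP_def intro!: ideal_I.lmult fun_form_Omega)
  moreover have "add_form (wedge (fun_form g) (dform n f)) (wedge (dform n g) (fun_form f)) \<in> ideal_I n"
    using assms pf by (auto simp: PP_def intro!: ideal_I.add ideal_I.lmult fun_form_Omega dform_Omega)
  ultimately show ?thesis using assms pf unfolding PP_def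
    by (auto intro!: polyfun.pmult)
qed

lemma PP_zero: "(\<lambda>x. 0) \<in> PP n"
proof -
  have "fun_form (\<lambda>x. 0) = zero_form" "dform n (\<lambda>x. 0) = zero_form"
    unfolding fun_form_def zero_form_def dform_def partial_const by auto
  then show ?thesis unfolding PP_def by (auto intro: ideal_I.zero polyfun.pconst)
qed

lemma PP_sum:
  assumes "finite A" "\<And>a. a \<in> A \<Longrightarrow> f a \<in> PP n"
  shows "(\<lambda>x. \<Sum>a\<in>A. f a x) \<in> PP n"
  using assms
proof (induction A rule: finite_induct)
  case empty then show ?case by (simp add: PP_zero)
next
  case (insert a A)
  then show ?case using PP_add[of "f a" n "\<lambda>x. \<Sum>a\<in>A. f a x"] by simp
qed

lemma tri_swap:
  fixes f :: "nat \<Rightarrow> nat \<Rightarrow> complex"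
  shows "(\<Sum>j=1..m. \<Sum>a\<le>m-j. f j a) = (\<Sum>a\<le>m. \<Sum>j=1..m-a. f j a)"
proof -
  have "(\<Sum>j=1..m. \<Sum>a\<le>m-j. f j a) = (\<Sum>(j,a)\<in>(SIGMA j:{1..m}. {..m-j}). f j a)"
    by (rule sum.Sigma) auto
  also have "(SIGMA j:{1..m}. {..m-j}) = prod.swap ` (SIGMA a:{..m}. {1..m-a})"
    by (auto simp: image_iff)
  also have "(\<Sum>(j,a)\<in>prod.swap ` (SIGMA a:{..m}. {1..m-a}). f j a) = (\<Sum>(a,j)\<in>(SIGMA a:{..m}. {1..m-a}). f j a)"
    by (subst sum.reindex) (auto simp: case_prod_unfold)
  also have "\<dots> = (\<Sum>a\<le>m. \<Sum>j=1..m-a. f j a)"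
    by (rule sum.Sigma[symmetric]) auto
  finally show ?thesis .
qed

lemma tri_swap2:
  fixes f :: "nat \<Rightarrow> nat \<Rightarrow> complex"
  shows "(\<Sum>j=1..m. \<Sum>b=j..m. f j b) = (\<Sum>b\<le>m. \<Sum>j=1..b. f j b)"
proof -
  have "(\<Sum>j=1..m. \<Sum>b=j..m. f j b) = (\<Sum>(j,b)\<in>(SIGMA j:{1..m}. {j..m}). f j b)"
    by (rule sum.Sigma) auto
  also have "(SIGMA j:{1..m}. {j..m}) = prod.swap ` (SIGMA b:{..m}. {1..b})"
    by (auto simp: image_iff)
  also have "(\<Sum>(j,b)\<in>prod.swap ` (SIGMA b:{..m}. {1..b}). f j b) = (\<Sum>(b,j)\<in>(SIGMA b:{..m}. {1..b}). f j b)"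
    by (subst sum.reindex) (auto simp: case_prod_unfold)
  also have "\<dots> = (\<Sum>b\<le>m. \<Sum>j=1..b. f j b)"
    by (rule sum.Sigma[symmetric]) auto
  finally show ?thesis .
qed

fun hh :: "nat \<Rightarrow> nat list \<Rightarrow> pfun" where
  "hh m [] = (\<lambda>x. if m = 0 then 1 else 0)"
| "hh m (k # ks) = (\<lambda>x. \<Sum>a\<le>m. x k ^ a * hh (m - a) ks x)"

lemma hh_Suc: "hh (Suc m) (k # ks) x = hh (Suc m) ks x + x k * hh m (k # ks) x"
proof -
  have "hh (Suc m) (k # ks) x = (\<Sum>a\<le>Suc m. x k ^ a * hh (Suc m - a) ks x)" by simp
  also have "\<dots> = hh (Suc m) ks x + (\<Sum>a\<le>m. x k ^ Suc a * hh (Suc m - Suc a) ks x)"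
    by (subst sum.atMost_Suc_shift) simp
  also have "(\<Sum>a\<le>m. x k ^ Suc a * hh (Suc m - Suc a) ks x) = x k * hh m (k # ks) x"
    by (simp add: sum_distrib_left mult.assoc)
  finally show ?thesis .
qed

lemma hh_indep: "k \<notin> set ks \<Longrightarrow> hh m ks (x(k := t)) = hh m ks x"
  by (induction ks arbitrary: m) auto

lemma newton_hh:
  assumes "distinct ks"
  shows "of_nat m * hh m ks x = (\<Sum>j=1..m. (\<Sum>i\<in>set ks. x i ^ j) * hh (m - j) ks x)"
  using assms
proof (induction ks arbitrary: m)
  case Nil then show ?case by simp
next
  case (Cons k ks)
  define y where "y = x k"
  define G where "G = (\<lambda>m. hh m ks x)"
  define p where "p = (\<lambda>j. \<Sum>i\<in>set ks. x i ^ j)"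
  have IH: "of_nat m' * G m' = (\<Sum>j=1..m'. p j * G (m' - j))" for m'
    using Cons unfolding G_def p_def by simp
  have H: "hh m' (k # ks) x = (\<Sum>a\<le>m'. y ^ a * G (m' - a))" for m'
    by (simp add: y_def G_def)
  have ps: "(\<Sum>i\<in>set (k # ks). x i ^ j) = y ^ j + p j" for j
    using Cons.prems by (simp add: y_def p_def)
  have s1: "(\<Sum>j=1..m. y ^ j * (\<Sum>a\<le>m-j. y ^ a * G (m - j - a))) = (\<Sum>b\<le>m. of_nat b * (y ^ b * G (m - b)))"
  proof -
    have "(\<Sum>j=1..m. y ^ j * (\<Sum>a\<le>m-j. y ^ a * G (m - j - a))) = (\<Sum>j=1..m. \<Sum>b=j..m. y ^ b * G (m - b))"
    proof (rule sum.cong[OF refl])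
      fix j assume j: "j \<in> {1..m}"
      have "y ^ j * (\<Sum>a\<le>m-j. y ^ a * G (m - j - a)) = (\<Sum>a\<le>m-j. y ^ (j + a) * G (m - (j + a)))"
        by (simp add: sum_distrib_left power_add mult.assoc diff_diff_add)
      also have "\<dots> = (\<Sum>b=j..m. y ^ b * G (m - b))"
      proof -
        have "(\<Sum>b=j..m. y ^ b * G (m - b)) = (\<Sum>a\<in>{0..m-j}. y ^ (a + j) * G (m - (a + j)))"
          using j by (subst sum.shift_bounds_cl_nat_ivl[symmetric]) simp
        then show ?thesis by (simp add: atLeast0AtMost add.commute)
      qed
      finally show "y ^ j * (\<Sum>a\<le>m-j. y ^ a * G (m - j - a)) = (\<Sum>b=j..m. y ^ b * G (m - b))" .
    qed
    also have "\<dots> = (\<Sum>b\<le>m. \<Sum>j=1..b. y ^ b * G (m - b))" by (rule tri_swap2)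
    also have "\<dots> = (\<Sum>b\<le>m. of_nat b * (y ^ b * G (m - b)))" by simp
    finally show ?thesis .
  qed
  have s2: "(\<Sum>j=1..m. p j * (\<Sum>a\<le>m-j. y ^ a * G (m - j - a))) = (\<Sum>a\<le>m. of_nat (m - a) * (y ^ a * G (m - a)))"
  proof -
    have "(\<Sum>j=1..m. p j * (\<Sum>a\<le>m-j. y ^ a * G (m - j - a))) = (\<Sum>j=1..m. \<Sum>a\<le>m-j. y ^ a * (p j * G (m - a - j)))"
      by (simp add: sum_distrib_left mult.left_commute diff_commute add.commute)
    also have "\<dots> = (\<Sum>a\<le>m. \<Sum>j=1..m-a. y ^ a * (p j * G (m - a - j)))" by (rule tri_swap)
    also have "\<dots> = (\<Sum>a\<le>m. y ^ a * (of_nat (m - a) * G (m - a)))"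
    proof (intro sum.cong refl)
      fix a assume "a \<in> {..m}"
      have "(\<Sum>j=1..m-a. y ^ a * (p j * G (m - a - j))) = y ^ a * (\<Sum>j=1..m-a. p j * G (m - a - j))"
        by (simp add: sum_distrib_left)
      also have "\<dots> = y ^ a * (of_nat (m - a) * G (m - a))" by (simp only: IH)
      finally show "(\<Sum>j=1..m-a. y ^ a * (p j * G (m - a - j))) = y ^ a * (of_nat (m - a) * G (m - a))" .
    qed
    finally show ?thesis by (simp add: mult.left_commute)
  qed
  have "(\<Sum>j=1..m. (\<Sum>i\<in>set (k # ks). x i ^ j) * hh (m - j) (k # ks) x)
      = (\<Sum>j=1..m. y ^ j * (\<Sum>a\<le>m-j. y ^ a * G (m - j - a))) + (\<Sum>j=1..m. p j * (\<Sum>a\<le>m-j. y ^ a * G (m - j - a)))"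
    unfolding ps H by (simp add: distrib_right sum.distrib)
  also have "\<dots> = (\<Sum>b\<le>m. of_nat m * (y ^ b * G (m - b)))"
    unfolding s1 s2 sum.distrib[symmetric]
  proof (intro sum.cong refl)
    fix b assume "b \<in> {..m}"
    then have "of_nat b + of_nat (m - b) = (of_nat m :: complex)" by (simp flip: of_nat_add)
    then show "of_nat b * (y ^ b * G (m - b)) + of_nat (m - b) * (y ^ b * G (m - b)) = of_nat m * (y ^ b * G (m - b))"
      by (simp flip: distrib_right)
  qed
  also have "\<dots> = of_nat m * hh m (k # ks) x"
    by (simp add: y_def G_def sum_distrib_left)
  finally show ?case ..
qed

definition AA :: "nat \<Rightarrow> nat set \<Rightarrow> (nat \<Rightarrow> nat) set" where
  "AA m S = {\<alpha>. (\<forall>i. i \<notin> S \<longrightarrow> \<alpha> i = 0) \<and> sum \<alpha> S = m}"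

lemma AA_finite:
  assumes "finite S" shows "finite (AA m S)"
proof (rule finite_subset)
  show "AA m S \<subseteq> {f. \<forall>x. (x \<in> S \<longrightarrow> f x \<in> {..m}) \<and> (x \<notin> S \<longrightarrow> f x = 0)}"
  proof
    fix \<alpha> assume a: "\<alpha> \<in> AA m S"
    have "\<alpha> i \<le> m" if "i \<in> S" for i
      using a member_le_sum[of i S \<alpha>] that assms unfolding AA_def by auto
    then show "\<alpha> \<in> {f. \<forall>x. (x \<in> S \<longrightarrow> f x \<in> {..m}) \<and> (x \<notin> S \<longrightarrow> f x = 0)}"
      using a unfolding AA_def by auto
  qed
  show "finite {f. \<forall>x. (x \<in> S \<longrightarrow> f x \<in> {..m}) \<and> (x \<notin> S \<longrightarrow> f x = (0::nat))}"
    by (rule finite_set_of_finite_funs) (use assms in auto)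
qed

lemma AA_insert:
  assumes "finite S" "k \<notin> S"
  shows "AA m (insert k S) = (\<lambda>(a, \<beta>). \<beta>(k := a)) ` (SIGMA a:{..m}. AA (m - a) S)"
proof
  show "AA m (insert k S) \<subseteq> (\<lambda>(a, \<beta>). \<beta>(k := a)) ` (SIGMA a:{..m}. AA (m - a) S)"
  proof
    fix \<alpha> assume a: "\<alpha> \<in> AA m (insert k S)"
    have s: "\<alpha> k + sum \<alpha> S = m" using a assms unfolding AA_def by simp
    have s2: "sum (\<alpha>(k := 0)) S = sum \<alpha> S" using assms by (intro sum.cong) auto
    have "(\<alpha> k, \<alpha>(k := 0)) \<in> (SIGMA a:{..m}. AA (m - a) S)"
      using a s s2 unfolding AA_def by auto
    moreover have "\<alpha> = (\<lambda>(a, \<beta>). \<beta>(k := a)) (\<alpha> k, \<alpha>(k := 0))" by simp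
    ultimately show "\<alpha> \<in> (\<lambda>(a, \<beta>). \<beta>(k := a)) ` (SIGMA a:{..m}. AA (m - a) S)" by blast
  qed
next
  show "(\<lambda>(a, \<beta>). \<beta>(k := a)) ` (SIGMA a:{..m}. AA (m - a) S) \<subseteq> AA m (insert k S)"
  proof
    fix \<gamma> assume "\<gamma> \<in> (\<lambda>(a, \<beta>). \<beta>(k := a)) ` (SIGMA a:{..m}. AA (m - a) S)"
    then obtain a \<beta> where a: "a \<in> {..m}" "\<beta> \<in> AA (m - a) S" and g: "\<gamma> = \<beta>(k := a)" by auto
    have s2: "sum (\<beta>(k := a)) S = sum \<beta> S" using assms by (intro sum.cong) auto
    show "\<gamma> \<in> AA m (insert k S)" unfolding g
      using a s2 assms unfolding AA_def by auto
  qed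
qed

lemma AA_inj:
  assumes "k \<notin> S"
  shows "inj_on (\<lambda>(a, \<beta>). \<beta>(k := a)) (SIGMA a:{..m}. AA (m - a) S)"
proof (rule inj_onI)
  fix p q assume p: "p \<in> (SIGMA a:{..m}. AA (m - a) S)" and q: "q \<in> (SIGMA a:{..m}. AA (m - a) S)"
    and e0: "(\<lambda>(a, \<beta>). \<beta>(k := a)) p = (\<lambda>(a, \<beta>). \<beta>(k := a)) q"
  obtain a \<beta> a' \<beta>' where pq: "p = (a, \<beta>)" "q = (a', \<beta>')" by (cases p, cases q) auto
  have e: "\<beta>(k := a) = \<beta>'(k := a')" using e0 pq by simp
  have "\<beta> \<in> AA (m - a) S" "\<beta>' \<in> AA (m - a') S" using p q pq by auto
  then have z: "\<beta> k = 0" "\<beta>' k = 0" using assms unfolding AA_def by auto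
  have "a = a'" using fun_cong[OF e, of k] by simp
  moreover have "\<beta> = \<beta>'"
  proof
    fix i show "\<beta> i = \<beta>' i" using fun_cong[OF e, of i] z by (cases "i = k") auto
  qed
  ultimately show "p = q" using pq by simp
qed

lemma complete_hom_hh:
  assumes "distinct ks"
  shows "complete_hom m (set ks) = hh m ks"
  using assms
proof (induction ks arbitrary: m)
  case Nil
  have "AA m {} = (if m = 0 then {\<lambda>i. 0} else {})" unfolding AA_def by auto
  then show ?case unfolding complete_hom_def AA_def[symmetric] by (auto intro!: ext)
next
  case (Cons k ks)
  define S where "S = set ks"
  have fS: "finite S" and kS: "k \<notin> S" using Cons.prems by (auto simp: S_def)
  show ?case
  proof (rule ext)
    fix x
    have "complete_hom m (set (k # ks)) x = (\<Sum>\<alpha>\<in>AA m (insert k S). \<Prod>i\<in>insert k S. x i ^ \<alpha> i)"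
      unfolding complete_hom_def AA_def S_def by simp
    also have "\<dots> = (\<Sum>(a, \<beta>)\<in>(SIGMA a:{..m}. AA (m - a) S). \<Prod>i\<in>insert k S. x i ^ (\<beta>(k := a)) i)"
      unfolding AA_insert[OF fS kS] by (subst sum.reindex[OF AA_inj[OF kS]]) (simp add: case_prod_unfold)
    also have "\<dots> = (\<Sum>a\<le>m. \<Sum>\<beta>\<in>AA (m - a) S. \<Prod>i\<in>insert k S. x i ^ (\<beta>(k := a)) i)"
      by (rule sum.Sigma[symmetric]) (auto intro: AA_finite[OF fS])
    also have "\<dots> = (\<Sum>a\<le>m. x k ^ a * (\<Sum>\<beta>\<in>AA (m - a) S. \<Prod>i\<in>S. x i ^ \<beta> i))"
    proof (rule sum.cong[OF refl])
      fix a
      have "(\<Prod>i\<in>insert k S. x i ^ (\<beta>(k := a)) i) = x k ^ a * (\<Prod>i\<in>S. x i ^ \<beta> i)" for \<beta>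
      proof -
        have "(\<Prod>i\<in>insert k S. x i ^ (\<beta>(k := a)) i) = x k ^ a * (\<Prod>i\<in>S. x i ^ (\<beta>(k := a)) i)"
          using fS kS by simp
        also have "(\<Prod>i\<in>S. x i ^ (\<beta>(k := a)) i) = (\<Prod>i\<in>S. x i ^ \<beta> i)"
          using kS by (intro prod.cong) auto
        finally show ?thesis .
      qed
      then show "(\<Sum>\<beta>\<in>AA (m - a) S. \<Prod>i\<in>insert k S. x i ^ (\<beta>(k := a)) i) = x k ^ a * (\<Sum>\<beta>\<in>AA (m - a) S. \<Prod>i\<in>S. x i ^ \<beta> i)"
        by (simp add: sum_distrib_left)
    qed
    also have "\<dots> = hh m (k # ks) x"
    proof -
      have IH: "(\<Sum>\<beta>\<in>AA m' S. \<Prod>i\<in>S. x i ^ \<beta> i) = hh m' ks x" for m'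
        using fun_cong[OF Cons.IH[of m'], of x] Cons.prems unfolding complete_hom_def AA_def S_def by simp
      show ?thesis by (simp add: IH)
    qed
    finally show "complete_hom m (set (k # ks)) x = hh m (k # ks) x" .
  qed
qed

lemma polyfun_pow: "f \<in> polyfun n \<Longrightarrow> (\<lambda>x. f x ^ k) \<in> polyfun n"
proof (induction k)
  case 0 then show ?case by (simp add: polyfun.pconst)
next
  case (Suc k) then show ?case using polyfun.pmult[OF Suc.prems Suc.IH] by simp
qed

lemma polyfun_sum:
  assumes "finite A" "\<And>a. a \<in> A \<Longrightarrow> f a \<in> polyfun n"
  shows "(\<lambda>x. \<Sum>a\<in>A. f a x) \<in> polyfun n"
  using assms
proof (induction A rule: finite_induct)
  case empty then show ?case by (simp add: polyfun.pconst)
next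
  case (insert a A)
  then show ?case using polyfun.padd[of "f a" n "\<lambda>x. \<Sum>a\<in>A. f a x"] by simp
qed

lemma hh_polyfun: "set ks \<subseteq> {1..n} \<Longrightarrow> hh m ks \<in> polyfun n"
proof (induction ks arbitrary: m)
  case Nil
  have "(\<lambda>x::nat\<Rightarrow>complex. if m = 0 then 1 else 0) \<in> polyfun n" by (rule polyfun.pconst)
  then show ?case by simp
next
  case (Cons k ks)
  have v: "(\<lambda>x. x k) \<in> polyfun n" using Cons.prems by (auto intro: polyfun.pvar)
  have "(\<lambda>x. \<Sum>a\<le>m. x k ^ a * hh (m - a) ks x) \<in> polyfun n"
    by (rule polyfun_sum) (use Cons in \<open>auto intro!: polyfun.pmult polyfun_pow[OF v]\<close>)
  then show ?case by simp
qed

lemma hh_base: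
  assumes "1 \<le> m" "m \<le> n"
  shows "hh m [1..<Suc n] \<in> PP n"
proof -
  define L where "L = [1..<Suc n]"
  have sL: "set L = {1..n}" "distinct L" by (auto simp: L_def)
  have "(\<lambda>x. \<Sum>j\<in>{1..m}. hh (m - j) L x * power_sum n j x) \<in> PP n"
    using assms sL by (intro PP_sum PP_mult PP_power_sum hh_polyfun) auto
  then have "(\<lambda>x. (\<lambda>x. 1 / of_nat m) x * (\<Sum>j\<in>{1..m}. hh (m - j) L x * power_sum n j x)) \<in> PP n"
    by (intro PP_mult polyfun.pconst)
  moreover have "(\<lambda>x. (\<lambda>x. 1 / of_nat m) x * (\<Sum>j\<in>{1..m}. hh (m - j) L x * power_sum n j x)) = hh m L"
  proof
    fix x
    have "of_nat m * hh m L x = (\<Sum>j\<in>{1..m}. hh (m - j) L x * power_sum n j x)"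
      using newton_hh[OF sL(2), of m x] sL(1) by (simp add: power_sum_def mult.commute)
    then show "(\<lambda>x. 1 / of_nat m) x * (\<Sum>j\<in>{1..m}. hh (m - j) L x * power_sum n j x) = hh m L x"
      using assms by (simp add: field_simps)
  qed
  ultimately show ?thesis by (simp add: L_def)
qed

lemma hh_step:
  "Suc d \<le> m \<Longrightarrow> m \<le> n \<Longrightarrow> hh m [Suc d..<Suc n] \<in> PP n"
proof (induction d arbitrary: m)
  case 0 then show ?case using hh_base by simp
next
  case (Suc d)
  obtain m' where m: "m = Suc m'" using Suc.prems by (cases m) auto
  have L: "[Suc d..<Suc n] = Suc d # [Suc (Suc d)..<Suc n]" using Suc.prems by (simp add: upt_conv_Cons)
  define ks where "ks = [Suc (Suc d)..<Suc n]"
  have A: "hh (Suc m') (Suc d # ks) \<in> PP n"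
  proof -
    have "hh (Suc m') [Suc d..<Suc n] \<in> PP n" by (rule Suc.IH) (use Suc.prems m in auto)
    then show ?thesis unfolding L ks_def .
  qed
  have B: "hh m' (Suc d # ks) \<in> PP n"
  proof -
    have "hh m' [Suc d..<Suc n] \<in> PP n" by (rule Suc.IH) (use Suc.prems m in auto)
    then show ?thesis unfolding L ks_def .
  qed
  have pv: "(\<lambda>x. (-1) * x (Suc d)) \<in> polyfun n"
    using Suc.prems by (intro polyfun.pmult polyfun.pconst polyfun.pvar) auto
  have "(\<lambda>x. hh (Suc m') (Suc d # ks) x + (\<lambda>x. (-1) * x (Suc d)) x * hh m' (Suc d # ks) x) \<in> PP n"
    by (intro PP_add A PP_mult B pv)
  moreover have "(\<lambda>x. hh (Suc m') (Suc d # ks) x + (\<lambda>x. (-1) * x (Suc d)) x * hh m' (Suc d # ks) x)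
      = hh (Suc m') ks"
    by (rule ext) (simp only: hh_Suc, simp del: hh.simps add: algebra_simps)
  ultimately have "hh (Suc m') ks \<in> PP n" by simp
  then show ?case unfolding m ks_def .
qed

lemma dform_single: "k \<in> {1..n} \<Longrightarrow> dform n f {k} = partial k f"
proof -
  assume k: "k \<in> {1..n}"
  have "(THE j. {k} = {j}) = k" by (rule the_equality) auto
  then show ?thesis using k unfolding dform_def by auto
qed

lemma dform_nonsingle: "\<not> (\<exists>k\<in>{1..n}. S = {k}) \<Longrightarrow> dform n f S = (\<lambda>x. 0)"
  unfolding dform_def by simp

theorem lemma18:
  fixes n r i :: nat
  assumes "1 \<le> r" and "r \<le> n" and "r \<le> i" and "i \<le> n"
  shows "(\<lambda>U. if U = {r..n} then partial i (complete_hom r {r..n}) else (\<lambda>x. 0))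
           \<in> ideal_I n"
proof -
  define f where "f = hh r [r..<Suc n]"
  have cf: "complete_hom r {r..n} = f"
    unfolding f_def using complete_hom_hh[of "[r..<Suc n]" r]
    by (simp del: upt_Suc add: atLeastLessThanSuc_atLeastAtMost)
  have fP: "f \<in> PP n" unfolding f_def using hh_step[of "r - 1" r n] assms by simp
  then have dI: "dform n f \<in> ideal_I n" by (simp add: PP_def)
  define V where "V = {r..n} - {i}"
  define c where "c = wsign {i} V"
  have cc: "c * c = 1" unfolding c_def wsign_def by (simp flip: power_mult_distrib)
  define v :: form where "v = (\<lambda>U. if U = V then (\<lambda>x. c) else (\<lambda>x. 0))"
  have vO: "v \<in> Omega n" unfolding Omega_def v_def V_def using assms by (auto intro: polyfun.pconst)
  have indep: "partial k f = (\<lambda>x. 0)" if "k < r" for k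
    unfolding f_def by (rule partial_indep, rule hh_indep) (use that in auto)
  have iU: "i \<in> {r..n}" using assms by auto
  have "wedge (dform n f) v = (\<lambda>U. if U = {r..n} then partial i f else (\<lambda>x. 0))"
  proof (intro ext)
    fix U x
    show "wedge (dform n f) v U x = (if U = {r..n} then partial i f else (\<lambda>x. 0)) x"
    proof (cases "finite U")
      case False
      then have "U \<noteq> {r..n}" by auto
      then show ?thesis using False by (simp add: wedge_def)
    next
      case True
      have tm: "wsign S (U - S) * dform n f S x * v (U - S) x
          = (if S = {i} then (if U = {r..n} then partial i f x else 0) else 0)" if S: "S \<in> Pow U" for S
      proof (cases "U - S = V")
        case False
        have "\<not> (S = {i} \<and> U = {r..n})" using False unfolding V_def by auto
        then show ?thesis using False unfolding v_def by auto
      next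
        case True
        show ?thesis
        proof (cases "S = {i} \<and> U = {r..n}")
          case True
          then have "dform n f S x = partial i f x" using dform_single[of i n f] assms by simp
          then show ?thesis using True \<open>U - S = V\<close> cc unfolding v_def c_def
            by (simp add: mult.commute mult.left_commute)
        next
          case False
          have "dform n f S x = 0"
          proof (cases "\<exists>k\<in>{1..n}. S = {k}")
            case True
            then obtain k where k: "k \<in> {1..n}" "S = {k}" by auto
            have "k \<in> U" "k \<notin> V" using k S \<open>U - S = V\<close> by auto
            have "k \<noteq> i"
            proof
              assume "k = i"
              then have "U = insert i (U - S)" using k S by auto
              then have "U = {r..n}" using \<open>U - S = V\<close> iU unfolding V_def by (simp add: insert_absorb)
              then show False using False k \<open>k = i\<close> by auto
            qed
            then have "k < r" using \<open>k \<notin> V\<close> k unfolding V_def by auto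
            then show ?thesis using k indep dform_single[of k n f] by simp
          next
            case False then show ?thesis using dform_nonsingle[of n S f] by simp
          qed
          then show ?thesis using False by auto
        qed
      qed
      have "wedge (dform n f) v U x = (\<Sum>S\<in>Pow U. if S = {i} then (if U = {r..n} then partial i f x else 0) else 0)"
        unfolding wedge_def if_P[OF True] by (rule sum.cong[OF refl]) (rule tm)
      also have "\<dots> = (if U = {r..n} then partial i f x else 0)"
        using True iU by (subst sum.delta) auto
      finally show ?thesis by simp
    qed
  qed
  moreover have "wedge (dform n f) v \<in> ideal_I n" by (rule ideal_I.rmult[OF vO dI])
  ultimately show ?thesis unfolding cf by simp
qed

end
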